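(* Let $(X,\mathcal{A},\mu)$ be a probability space, $\theta$ a measure-preserving endomorphism, $\varphi$ a ceiling function, and $(\overline{X},\overline{\mu},(\Phi_t))$ the associated special flow. Let $\overline{A}\subset\overline{X}$ be a hole such that for some $\lambda>0$ the limit \[\alpha:=\lim_{n\to\infty}-\frac{1}{n\lambda}\log\overline{\mu}\big(\{(x,s)\in\overline{X}:\forall\tau\in[0,n\lambda]:\Phi_\tau(x,s)\notin\overline{A}\}\big)\] exists. Then for every sequence $(t_k)_{k\in\mathbb{N}}$ of positive reals with $t_k\to\infty$ the limit \[\lim_{k\to\infty}-\frac{1}{t_k}\log\overline{\mu}\big(\{(x,s)\in\overline{X}:\forall\tau\in[0,t_k]:\Phi_\tau(x,s)\notin\overline{A}\}\big)\] exists and equals $\alpha$. In particular the escape rate $\rho(\overline{A},\varphi)$ exists and equals $\alpha$.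
   Context: A ceiling function is a measurable $\varphi:X\to\mathbb{R}$ with $\inf\varphi>0$. $S_n\varphi=\sum_{k=0}^{n-1}\varphi\circ\theta^k$, $N_t^\varphi(x)=\min\{n\in\mathbb{N}_0:S_n\varphi(x)>t\}$. Special flow: $\overline{X}=\{(x,s):0\le s<\varphi(x)\}$ with $\overline{\mu}$ the restriction of $\mu\otimes$Lebesgue; $\Phi_t(x,s)=(x,s+t)$ if $t<\varphi(x)-s$ and $\Phi_t(x,s)=(\theta^{N-1}x,s+t-S_{N-1}\varphi(x))$ with $N=N^\varphi_{s+t}(x)$ otherwise. A hole is a measurable $\overline{A}\subset\overline{X}$ with $\bigcup_{t\ge0}\Phi_t^{-1}(\overline{A})=\overline{X}$ a.e. and $\bigcup_{t\in[0,\tau]}\Phi_t^{-1}(\overline{A})$ measurable for all $\tau\ge0$. The escape rate $\rho(\overline{A},\varphi)$ is $\lim_{t\to\infty}-\frac1t\log\overline{\mu}(\{(x,s):\forall\tau\in[0,t]:\Phi_\tau(x,s)\notin\overline{A}\})$ when this limit exists (i.e. limsup and liminf coincide). *)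

theory Defs
  imports "HOL-Probability.Probability"
begin

definition measure_preserving :: "'a measure \<Rightarrow> ('a \<Rightarrow> 'a) \<Rightarrow> bool" where
  "measure_preserving M \<theta> \<longleftrightarrow> \<theta> \<in> measurable M M \<and> distr M M \<theta> = M"

definition birk_sum :: "('a \<Rightarrow> 'a) \<Rightarrow> ('a \<Rightarrow> real) \<Rightarrow> nat \<Rightarrow> 'a \<Rightarrow> real" where
  "birk_sum \<theta> \<phi> n x = (\<Sum>k<n. \<phi> ((\<theta> ^^ k) x))"

definition lap_number :: "('a \<Rightarrow> 'a) \<Rightarrow> ('a \<Rightarrow> real) \<Rightarrow> real \<Rightarrow> 'a \<Rightarrow> nat" where
  "lap_number \<theta> \<phi> t x = (LEAST n. birk_sum \<theta> \<phi> n x > t)"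

definition flow_space :: "'a measure \<Rightarrow> ('a \<Rightarrow> real) \<Rightarrow> ('a \<times> real) set" where
  "flow_space M \<phi> = {(x, s). x \<in> space M \<and> 0 \<le> s \<and> s < \<phi> x}"

definition flow_measure :: "'a measure \<Rightarrow> ('a \<Rightarrow> real) \<Rightarrow> ('a \<times> real) measure" where
  "flow_measure M \<phi> = restrict_space (M \<Otimes>\<^sub>M lborel) (flow_space M \<phi>)"

definition special_flow :: "('a \<Rightarrow> 'a) \<Rightarrow> ('a \<Rightarrow> real) \<Rightarrow> real \<Rightarrow> 'a \<times> real \<Rightarrow> 'a \<times> real" where
  "special_flow \<theta> \<phi> t z = (case z of (x, s) \<Rightarrow>
     (if t < \<phi> x - s then (x, s + t)
      else (let N = lap_number \<theta> \<phi> (s + t) x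
            in ((\<theta> ^^ (N - 1)) x, s + t - birk_sum \<theta> \<phi> (N - 1) x))))"

definition ceiling_function :: "'a measure \<Rightarrow> ('a \<Rightarrow> real) \<Rightarrow> bool" where
  "ceiling_function M \<phi> \<longleftrightarrow> \<phi> \<in> borel_measurable M \<and> (\<exists>c>0. \<forall>x\<in>space M. c \<le> \<phi> x)"

definition is_hole :: "'a measure \<Rightarrow> ('a \<Rightarrow> 'a) \<Rightarrow> ('a \<Rightarrow> real) \<Rightarrow> ('a \<times> real) set \<Rightarrow> bool" where
  "is_hole M \<theta> \<phi> A \<longleftrightarrow>
     A \<in> sets (flow_measure M \<phi>) \<and>
     (AE z in flow_measure M \<phi>. \<exists>t\<ge>0. special_flow \<theta> \<phi> t z \<in> A) \<and>
     (\<forall>\<tau>\<ge>0. {z \<in> flow_space M \<phi>. \<exists>t\<in>{0..\<tau>}. special_flow \<theta> \<phi> t z \<in> A}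
              \<in> sets (flow_measure M \<phi>))"

definition survivors :: "'a measure \<Rightarrow> ('a \<Rightarrow> 'a) \<Rightarrow> ('a \<Rightarrow> real) \<Rightarrow> ('a \<times> real) set \<Rightarrow> real \<Rightarrow> ('a \<times> real) set" where
  "survivors M \<theta> \<phi> A t = {z \<in> flow_space M \<phi>. \<forall>\<tau>\<in>{0..t}. special_flow \<theta> \<phi> \<tau> z \<notin> A}"

definition eln :: "ennreal \<Rightarrow> ereal" where
  "eln x = (if x = 0 then -\<infinity> else if x = \<infinity> then \<infinity> else ereal (ln (enn2real x)))"

definition escape_quot :: "'a measure \<Rightarrow> ('a \<Rightarrow> 'a) \<Rightarrow> ('a \<Rightarrow> real) \<Rightarrow> ('a \<times> real) set \<Rightarrow> real \<Rightarrow> ereal" where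
  "escape_quot M \<theta> \<phi> A t =
     - (eln (emeasure (flow_measure M \<phi>) (survivors M \<theta> \<phi> A t))) / ereal t"

end

theory Submission imports Defs begin

lemma floor_facts:
  fixes t lam :: real assumes lam: "lam > 0" and t: "t \<ge> 0"
  shows "real (nat \<lfloor>t/lam\<rfloor>) * lam \<le> t" "t < real (nat \<lfloor>t/lam\<rfloor>) * lam + lam"
proof -
  have f0: "\<lfloor>t/lam\<rfloor> \<ge> 0" using t lam by simp
  have e: "real (nat \<lfloor>t/lam\<rfloor>) = of_int \<lfloor>t/lam\<rfloor>" using f0 by simp
  have "of_int \<lfloor>t/lam\<rfloor> \<le> t/lam" by simp
  then have "of_int \<lfloor>t/lam\<rfloor> * lam \<le> t" by (simp add: pos_le_divide_eq[OF lam])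
  then show "real (nat \<lfloor>t/lam\<rfloor>) * lam \<le> t" using e by simp
  have "t/lam < of_int \<lfloor>t/lam\<rfloor> + 1" by linarith
  then have "t < (of_int \<lfloor>t/lam\<rfloor> + 1) * lam" using lam by (metis pos_divide_less_eq)
  then show "t < real (nat \<lfloor>t/lam\<rfloor>) * lam + lam" using e by (simp add: algebra_simps)
qed

lemma key:
  fixes L :: "real \<Rightarrow> ereal" and lam :: real and \<alpha> :: ereal
  assumes mono: "\<And>s t. 0 \<le> s \<Longrightarrow> s \<le> t \<Longrightarrow> L s \<le> L t"
    and lam: "lam > 0"
    and lim: "(\<lambda>n. L (real n * lam) / ereal (real n * lam)) \<longlonglongrightarrow> \<alpha>"
  shows "((\<lambda>t. L t / ereal t) \<longlongrightarrow> \<alpha>) at_top"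
proof (subst order_tendsto_iff, safe)
  fix a assume "a < \<alpha>"
  obtain r where r: "a < ereal r" "ereal r < \<alpha>" using ereal_dense2[OF \<open>a < \<alpha>\<close>] by blast
  obtain r' where r': "a < ereal r'" "ereal r' < ereal r" using ereal_dense2[OF r(1)] by blast
  then have rr: "r' < r" by simp
  from lim r(2) have "eventually (\<lambda>n. ereal r < L(real n*lam)/ereal(real n*lam)) sequentially"
    by (simp add: order_tendsto_iff)
  then obtain N where N: "\<And>n. n \<ge> N \<Longrightarrow> ereal r < L(real n*lam)/ereal(real n*lam)"
    by (auto simp: eventually_sequentially)
  define T where "T = max (real (N+1) * lam) (\<bar>r\<bar>*lam/(r-r') + 1)"
  show "eventually (\<lambda>t. a < L t / ereal t) at_top"
    unfolding eventually_at_top_linorder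
  proof (intro exI allI impI)
    fix t assume t: "T \<le> t"
    define n where "n = nat \<lfloor>t/lam\<rfloor>"
    have T1: "real (N+1) * lam \<le> t" and T2: "\<bar>r\<bar>*lam/(r-r') + 1 \<le> t" using t by (auto simp: T_def)
    have tpos: "t > 0" using T1 lam by (smt (verit) mult_pos_pos of_nat_0_less_iff zero_less_Suc add.commute Suc_eq_plus1)
    have f1: "real n * lam \<le> t" and f2: "t < real n * lam + lam"
      using floor_facts[OF lam less_imp_le[OF tpos]] unfolding n_def by auto
    have "real (N+1) \<le> t / lam" using T1 lam by (simp add: pos_le_divide_eq)
    then have "int (N+1) \<le> \<lfloor>t/lam\<rfloor>" by (metis floor_of_nat le_floor_iff of_int_of_nat_eq)
    then have nN: "n \<ge> N+1" by (simp add: n_def)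
    have npos: "real n * lam > 0" using nN lam by simp
    have "ereal r < L(real n*lam)/ereal(real n*lam)" using N nN by simp
    then have A: "ereal (real n*lam) * ereal r < L(real n*lam)"
      using ereal_less_divide_pos[of "ereal (real n*lam)"] npos by simp
    have "r * (real n * lam) - r * t \<ge> - \<bar>r\<bar> * lam"
    proof -
      have "\<bar>r * (real n * lam - t)\<bar> \<le> \<bar>r\<bar> * lam"
        using f1 f2 by (simp add: abs_mult mult_left_mono)
      then show ?thesis by (simp add: algebra_simps)
    qed
    moreover have "(r - r') * t \<ge> \<bar>r\<bar> * lam"
    proof -
      have "\<bar>r\<bar>*lam/(r-r') \<le> t" using T2 by simp
      then show ?thesis using rr by (simp add: pos_divide_le_eq mult.commute)
    qed
    ultimately have B: "r' * t \<le> r * (real n * lam)" by (simp add: algebra_simps)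
    have "ereal (r' * t) < L t"
    proof -
      have "ereal (r' * t) \<le> ereal (real n*lam) * ereal r" using B by (simp add: mult.commute)
      also have "\<dots> < L (real n * lam)" by (rule A)
      also have "\<dots> \<le> L t" using mono npos f1 by simp
      finally show ?thesis .
    qed
    then have "ereal r' < L t / ereal t"
      using ereal_less_divide_pos[of "ereal t"] tpos by (simp add: mult.commute)
    then show "a < L t / ereal t" using r'(1) by simp
  qed
next
  fix b assume "\<alpha> < b"
  obtain r where r: "\<alpha> < ereal r" "ereal r < b" using ereal_dense2[OF \<open>\<alpha> < b\<close>] by blast
  obtain r' where r': "ereal r < ereal r'" "ereal r' < b" using ereal_dense2[OF r(2)] by blast
  then have rr: "r < r'" by simp
  from lim r(1) have "eventually (\<lambda>n. L(real n*lam)/ereal(real n*lam) < ereal r) sequentially"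
    by (simp add: order_tendsto_iff)
  then obtain N where N: "\<And>n. n \<ge> N \<Longrightarrow> L(real n*lam)/ereal(real n*lam) < ereal r"
    by (auto simp: eventually_sequentially)
  define T where "T = max (real (N+1) * lam) (\<bar>r\<bar>*lam/(r'-r) + 1)"
  show "eventually (\<lambda>t. L t / ereal t < b) at_top"
    unfolding eventually_at_top_linorder
  proof (intro exI allI impI)
    fix t assume t: "T \<le> t"
    define m where "m = nat \<lfloor>t/lam\<rfloor> + 1"
    have T1: "real (N+1) * lam \<le> t" and T2: "\<bar>r\<bar>*lam/(r'-r) + 1 \<le> t" using t by (auto simp: T_def)
    have tpos: "t > 0" using T1 lam by (smt (verit) mult_pos_pos of_nat_0_less_iff zero_less_Suc add.commute Suc_eq_plus1)
    have f1: "t < real m * lam" and f2: "real m * lam \<le> t + lam"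
      using floor_facts[OF lam less_imp_le[OF tpos]] unfolding m_def by (auto simp del: of_nat_nat simp add: algebra_simps)
    have "real (N+1) \<le> t / lam" using T1 lam by (simp add: pos_le_divide_eq)
    then have "int (N+1) \<le> \<lfloor>t/lam\<rfloor>" by (metis floor_of_nat le_floor_iff of_int_of_nat_eq)
    then have nN: "m \<ge> N" by (simp add: m_def)
    have npos: "real m * lam > 0" using lam by (simp add: m_def)
    have "L(real m*lam)/ereal(real m*lam) < ereal r" using N nN by simp
    then have A: "L(real m*lam) < ereal (real m*lam) * ereal r"
      using ereal_divide_less_pos[of "ereal (real m*lam)"] npos by simp
    have "r * (real m * lam) - r * t \<le> \<bar>r\<bar> * lam"
    proof -
      have "\<bar>r * (real m * lam - t)\<bar> \<le> \<bar>r\<bar> * lam"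
        using f1 f2 by (simp add: abs_mult mult_left_mono)
      then show ?thesis by (simp add: algebra_simps)
    qed
    moreover have "(r' - r) * t \<ge> \<bar>r\<bar> * lam"
    proof -
      have "\<bar>r\<bar>*lam/(r'-r) \<le> t" using T2 by simp
      then show ?thesis using rr by (simp add: pos_divide_le_eq mult.commute)
    qed
    ultimately have B: "r * (real m * lam) \<le> r' * t" by (simp add: algebra_simps)
    have "L t < ereal (r' * t)"
    proof -
      have "L t \<le> L (real m * lam)" using mono tpos f1 by simp
      also have "\<dots> < ereal (real m*lam) * ereal r" by (rule A)
      also have "\<dots> \<le> ereal (r' * t)" using B by (simp add: mult.commute)
      finally show ?thesis .
    qed
    then have "L t / ereal t < ereal r'"
      using ereal_divide_less_pos[of "ereal t"] tpos by (simp add: mult.commute)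
    then show "L t / ereal t < b" using r'(2) by simp
  qed
qed
lemma eln_mono: "x \<le> y \<Longrightarrow> eln x \<le> eln y"
proof -
  assume xy: "x \<le> y"
  show ?thesis
  proof (cases "x = 0 \<or> y = \<infinity>")
    case True then show ?thesis by (auto simp: eln_def)
  next
    case False
    then have x0: "x \<noteq> 0" and yi: "y \<noteq> \<infinity>" by auto
    then have xi: "x \<noteq> \<infinity>" using xy by (auto simp: top_unique)
    have y0: "y \<noteq> 0" using x0 xy by (auto simp: bot_unique)
    have p: "enn2real x > 0" using x0 xi by (simp add: enn2real_positive_iff less_top zero_less_iff_neq_zero)
    have "enn2real x \<le> enn2real y" using xy yi by (simp add: enn2real_mono less_top)
    then show ?thesis using x0 xi y0 yi p by (simp add: eln_def)
  qed
qed

theorem lemma3p8: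
  fixes M :: "'a measure" and \<theta> :: "'a \<Rightarrow> 'a" and \<phi> :: "'a \<Rightarrow> real"
    and A :: "('a \<times> real) set" and lam :: real and \<alpha> :: ereal
  assumes "prob_space M"
    and "measure_preserving M \<theta>"
    and "ceiling_function M \<phi>"
    and "is_hole M \<theta> \<phi> A"
    and "lam > 0"
    and "(\<lambda>n. escape_quot M \<theta> \<phi> A (real n * lam)) \<longlonglongrightarrow> \<alpha>"
  shows "(\<forall>tk :: nat \<Rightarrow> real. (\<forall>k. tk k > 0) \<longrightarrow> filterlim tk at_top sequentially \<longrightarrow>
            (\<lambda>k. escape_quot M \<theta> \<phi> A (tk k)) \<longlonglongrightarrow> \<alpha>)
         \<and> ((\<lambda>t. escape_quot M \<theta> \<phi> A t) \<longlongrightarrow> \<alpha>) at_top"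
proof -
  define F where "F = flow_measure M \<phi>"
  define L where "L t = - eln (emeasure F (survivors M \<theta> \<phi> A t))" for t
  have sp: "space F = flow_space M \<phi>"
    by (auto simp: F_def flow_measure_def space_restrict_space space_pair_measure flow_space_def)
  have meas: "survivors M \<theta> \<phi> A t \<in> sets F" if "0 \<le> t" for t
  proof -
    have H: "{z \<in> flow_space M \<phi>. \<exists>s\<in>{0..t}. special_flow \<theta> \<phi> s z \<in> A} \<in> sets F"
      using assms(4) that unfolding is_hole_def F_def by blast
    have "survivors M \<theta> \<phi> A t = space F - {z \<in> flow_space M \<phi>. \<exists>s\<in>{0..t}. special_flow \<theta> \<phi> s z \<in> A}"
      unfolding survivors_def sp by blast
    then show ?thesis using H by simp
  qed
  have mono: "L s \<le> L t" if "0 \<le> s" "s \<le> t" for s t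
  proof -
    have "survivors M \<theta> \<phi> A t \<subseteq> survivors M \<theta> \<phi> A s"
      using that unfolding survivors_def by fastforce
    then have "emeasure F (survivors M \<theta> \<phi> A t) \<le> emeasure F (survivors M \<theta> \<phi> A s)"
      using meas[OF \<open>0 \<le> s\<close>] by (rule emeasure_mono)
    then show ?thesis unfolding L_def ereal_minus_le_minus by (rule eln_mono)
  qed
  have eq: "escape_quot M \<theta> \<phi> A t = L t / ereal t" for t
    by (simp add: escape_quot_def L_def F_def)
  have lim: "(\<lambda>n. L (real n * lam) / ereal (real n * lam)) \<longlonglongrightarrow> \<alpha>"
    using assms(6) by (simp add: eq)
  have T: "((\<lambda>t. L t / ereal t) \<longlongrightarrow> \<alpha>) at_top"
    by (rule key[OF mono assms(5) lim])
  show ?thesis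
  proof (intro conjI allI impI)
    fix tk :: "nat \<Rightarrow> real" assume "filterlim tk at_top sequentially"
    from filterlim_compose[OF T this] show "(\<lambda>k. escape_quot M \<theta> \<phi> A (tk k)) \<longlonglongrightarrow> \<alpha>"
      by (simp add: eq)
  next
    show "((\<lambda>t. escape_quot M \<theta> \<phi> A t) \<longlongrightarrow> \<alpha>) at_top" using T by (simp add: eq)
  qed
qed
end
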